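(* Let $X$ be a real Banach space and let $C \subset X$ be a closed, convex and bounded set with $0 \in \mathrm{int}(C)$. Let $\{x_n\}_{n \in \mathbb{N}}$ be a dense subset of the boundary $\partial C$ of $C$ such that for every $n$ there is exactly one functional $f_n \in X^*$ with $\|f_n\| = 1$ supporting $C$ at $x_n$; i.e. $f_n(x_n) = d_n$ and $f_n(v) \le d_n$ for all $v \in C$. Put $D_n = \{x \in X : f_n(x) \le d_n\}$. Then $C = \bigcap_{n \in \mathbb{N}} D_n$. *)

theory Defs
  imports "HOL-Analysis.Analysis"
begin

end

theory Submission
  imports Defs
begin

lemma onorm_witness:
  fixes g :: "'a::real_normed_vector \<Rightarrow> real"
  assumes "bounded_linear g" "onorm g = 1"
  obtains w where "\<bar>g w\<bar> > norm w / 2" "w \<noteq> 0"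
proof -
  have "\<exists>w. \<bar>g w\<bar> > norm w / 2"
  proof (rule ccontr)
    assume neg: "\<not> ?thesis"
    have "norm (g w) \<le> (1/2) * norm w" for w
    proof -
      have "\<not> \<bar>g w\<bar> > norm w / 2" using neg by blast
      then show ?thesis by simp
    qed
    then have "onorm g \<le> 1/2" by (intro onorm_bound) auto
    with assms show False by simp
  qed
  then obtain w where w: "\<bar>g w\<bar> > norm w / 2" by blast
  moreover have "w \<noteq> 0" using w linear_simps(3)[OF assms(1)] by auto
  ultimately show ?thesis using that by blast
qed

theorem lemma12:
  fixes C :: "'a::banach set"
    and x :: "nat \<Rightarrow> 'a"
    and f :: "nat \<Rightarrow> 'a \<Rightarrow> real"
    and d :: "nat \<Rightarrow> real"
    and D :: "nat \<Rightarrow> 'a set"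
  assumes "closed C" and "convex C" and "bounded C"
    and "0 \<in> interior C"
    and "range x \<subseteq> frontier C"
    and "frontier C \<subseteq> closure (range x)"
    and "\<And>n. bounded_linear (f n) \<and> onorm (f n) = 1 \<and> f n (x n) = d n \<and> (\<forall>v\<in>C. f n v \<le> d n)"
    and "\<And>n g. bounded_linear g \<Longrightarrow> onorm g = 1 \<Longrightarrow> (\<forall>v\<in>C. g v \<le> g (x n)) \<Longrightarrow> g = f n"
    and "\<And>n. D n = {y. f n y \<le> d n}"
  shows "C = (\<Inter>n. D n)"
proof
  show "C \<subseteq> (\<Inter>n. D n)" using assms(7,9) by auto
next
  obtain r where r: "r > 0" "ball 0 r \<subseteq> C" using assms(4) by (meson mem_interior)
  have dlow: "d n \<ge> r / 4" for n
  proof -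
    have bl: "bounded_linear (f n)" and on: "onorm (f n) = 1" and sup: "\<forall>v\<in>C. f n v \<le> d n"
      using assms(7)[of n] by auto
    obtain w where w: "\<bar>f n w\<bar> > norm w / 2" "w \<noteq> 0" using onorm_witness[OF bl on] by blast
    define s where "s = sgn (f n w) * (r / (2 * norm w))"
    have nw: "norm w > 0" using w by simp
    have "norm (s *\<^sub>R w) = r / 2"
      using nw r w(1) by (auto simp: s_def abs_mult sgn_if)
    then have "s *\<^sub>R w \<in> C" using r by auto
    then have "f n (s *\<^sub>R w) \<le> d n" using sup by auto
    moreover have "f n (s *\<^sub>R w) = s * f n w" using linear_simps(5)[OF bl] by simp
    moreover have "s * f n w = \<bar>f n w\<bar> * (r / (2 * norm w))"
      by (auto simp: s_def sgn_if)
    moreover have "\<bar>f n w\<bar> * (r / (2 * norm w)) \<ge> (norm w / 2) * (r / (2 * norm w))"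
      using w r nw by (intro mult_right_mono) auto
    moreover have "(norm w / 2) * (r / (2 * norm w)) = r / 4" using nw by (simp add: field_simps)
    ultimately show ?thesis by linarith
  qed
  show "(\<Inter>n. D n) \<subseteq> C"
  proof
    fix y assume yD: "y \<in> (\<Inter>n. D n)"
    show "y \<in> C"
    proof (rule ccontr)
      assume yC: "y \<notin> C"
      have "0 \<in> C" using assms(4) interior_subset by blast
      then have "closed_segment 0 y \<inter> frontier C \<noteq> {}"
        using yC by (intro connected_Int_frontier) auto
      then obtain z where z: "z \<in> closed_segment 0 y" "z \<in> frontier C" by blast
      then obtain t where t: "0 \<le> t" "t \<le> 1" "z = t *\<^sub>R y"
        by (auto simp: closed_segment_def)
      have zC: "z \<in> C" using z(2) assms(1) frontier_subset_closed by blast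
      have "t \<noteq> 1" using zC yC t by auto
      have "z \<noteq> 0" using z(2) assms(4) by (auto simp: frontier_def)
      then have "t \<noteq> 0" using t by auto
      have t01: "0 < t" "t < 1" using t \<open>t \<noteq> 0\<close> \<open>t \<noteq> 1\<close> by auto
      define e where "e = r * (1 - t) / 8"
      have e: "e > 0" using r t01 by (simp add: e_def)
      have "z \<in> closure (range x)" using z(2) assms(6) by blast
      then obtain n where n: "dist (x n) z < e"
        using e by (auto simp: closure_approachable)
      have bl: "bounded_linear (f n)" and on: "onorm (f n) = 1" and fx: "f n (x n) = d n"
        using assms(7)[of n] by auto
      have "norm (f n (z - x n)) \<le> norm (z - x n)"
        using onorm[OF bl, of "z - x n"] on by simp
      moreover have "f n (z - x n) = f n z - d n" using fx linear_simps(2)[OF bl] by simp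
      moreover have "norm (z - x n) < e" using n by (simp add: dist_norm norm_minus_commute)
      ultimately have fz: "f n z > d n - e" by auto
      have "f n z = t * f n y" using t(3) linear_simps(5)[OF bl] by simp
      have "(1 - t) * d n \<ge> (1 - t) * (r / 4)"
        using dlow[of n] t01 by (intro mult_left_mono) auto
      moreover have "e < (1 - t) * (r / 4)"
      proof -
        have "(1 - t) * r > 0" using r t01 by simp
        then show ?thesis unfolding e_def by (simp add: mult.commute)
      qed
      ultimately have "(1 - t) * d n > e" by linarith
      then have "t * f n y > t * d n" using fz \<open>f n z = t * f n y\<close> by (simp add: algebra_simps)
      then have "f n y > d n" using t01 by (simp add: mult_less_cancel_left)
      moreover have "f n y \<le> d n" using yD assms(9)[of n] by auto
      ultimately show False by simp
    qed
  qed
qed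

end
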